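(* In the M/M/1 setting below, for every belief distribution $\Lambda$ satisfying the standing assumptions, $q^S_m\le q^S_e$.
   Context: Setting: an M/M/1 queue with true (deterministic) Poisson arrival rate $\lambda>0$ and exponential service times with rate $\mu$, so the expected time in system at effective arrival rate $x\in[0,\mu)$ is $W(x)=1/(\mu-x)$. Each served customer receives reward $R$ and incurs waiting cost $C>0$ per unit time, with $R\ge C/\mu$. Customers' beliefs about the arrival rate are described by a non-degenerate nonnegative random variable $\Lambda$ whose support has minimum $\lambda_{\min}$ and maximum $\lambda_{\max}$, with $0\le\lambda_{\min}<\lambda<\lambda_{\max}<\mu$. Shared-belief quantities, for $q\in[0,1]$: the revenue rate $\mathrm{Rev}^S(q)=q\lambda\,\mathbb{E}[R-C\,W(q\Lambda)]$ (strictly concave on $[0,1]$); $q^S_m$ is the maximizer of $\mathrm{Rev}^S$ over $q\in[0,1]$. The individual (no-fee) equilibrium $q^S_e$ is defined as follows: if $R-C\,\mathbb{E}[W(\Lambda)]\ge0$ then $q^S_e=1$; otherwise $q^S_e$ is the unique $q\in[0,1]$ with $C\,\mathbb{E}[W(q\Lambda)]=R$. *)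

theory Defs
  imports "HOL-Probability.Probability"
begin

text \<open>Expected time in system of an M/M/1 queue with service rate mu at effective
  arrival rate x.\<close>
definition W :: "real \<Rightarrow> real \<Rightarrow> real" where
  "W mu x = 1 / (mu - x)"

definition msupport :: "real measure \<Rightarrow> real set" where
  "msupport M = {x. \<forall>e>0. emeasure M (ball x e) > 0}"

text \<open>Shared-belief revenue rate Rev^S(q) = q lam E[R - C W(q Lambda)], where the
  belief Lambda has distribution M.\<close>
definition Rev_S :: "real measure \<Rightarrow> real \<Rightarrow> real \<Rightarrow> real \<Rightarrow> real \<Rightarrow> real \<Rightarrow> real" where
  "Rev_S M lam mu R C q = q * lam * (\<integral>x. (R - C * W mu (q * x)) \<partial>M)"

definition is_qSm :: "real measure \<Rightarrow> real \<Rightarrow> real \<Rightarrow> real \<Rightarrow> real \<Rightarrow> real \<Rightarrow> bool" where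
  "is_qSm M lam mu R C q \<longleftrightarrow> q \<in> {0..1} \<and>
     (\<forall>q'\<in>{0..1}. Rev_S M lam mu R C q' \<le> Rev_S M lam mu R C q)"

text \<open>q is the individual (no-fee) equilibrium q^S_e.\<close>
definition is_qSe :: "real measure \<Rightarrow> real \<Rightarrow> real \<Rightarrow> real \<Rightarrow> real \<Rightarrow> bool" where
  "is_qSe M mu R C q \<longleftrightarrow>
     (if R - C * (\<integral>x. W mu x \<partial>M) \<ge> 0 then q = 1
      else q \<in> {0..1} \<and> C * (\<integral>x. W mu (q * x) \<partial>M) = R)"

end

theory Submission
  imports Defs
begin

lemma AE_in_support:
  fixes M :: "real measure"
  assumes sM: "sets M = sets borel"
  shows "AE x in M. x \<in> msupport M"
proof -
  define I where "I = {(r,s). r \<in> \<rat> \<and> s \<in> \<rat> \<and> emeasure M (ball r s) = 0}"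
  have cI: "countable I"
  proof (rule countable_subset)
    show "I \<subseteq> \<rat> \<times> \<rat>" unfolding I_def by auto
    show "countable (\<rat> \<times> (\<rat>::real set))" by (intro countable_SIGMA countable_rat)
  qed
  have N: "(\<Union>i\<in>I. case i of (r,s) \<Rightarrow> ball r s) \<in> null_sets M"
  proof (rule null_sets_UN'[OF cI])
    fix i assume "i \<in> I"
    then obtain r s where i: "i = (r,s)" "emeasure M (ball r s) = 0" unfolding I_def by auto
    have "ball r s \<in> sets M" using sM by simp
    then show "(case i of (r,s) \<Rightarrow> ball r s) \<in> null_sets M" using i by (simp add: null_sets_def)
  qed
  show ?thesis
  proof (rule AE_I'[OF N], safe)
    fix x assume "x \<in> space M" "x \<notin> msupport M"
    then obtain e where e: "e > 0" "\<not> emeasure M (ball x e) > 0" unfolding msupport_def by auto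
    hence e0: "emeasure M (ball x e) = 0" by (simp add: not_gr_zero)
    obtain r where r: "r \<in> \<rat>" "x < r" "r < x + e/4" using Rats_dense_in_real[of x "x+e/4"] e by auto
    obtain s where s: "s \<in> \<rat>" "r - x < s" "s < e/2" using Rats_dense_in_real[of "r-x" "e/2"] r e by auto
    have sub: "ball r s \<subseteq> ball x e" using r s by (auto simp: dist_real_def)
    have "emeasure M (ball r s) \<le> emeasure M (ball x e)"
      by (rule emeasure_mono[OF sub]) (simp add: sM)
    hence "emeasure M (ball r s) = 0" using e0 by simp
    hence "(r,s) \<in> I" using r s unfolding I_def by auto
    moreover have "x \<in> ball r s" using r s by (simp add: dist_real_def)
    ultimately show "x \<in> (\<Union>i\<in>I. case i of (r,s) \<Rightarrow> ball r s)" by force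
  qed
qed

theorem proposition1:
  fixes M :: "real measure" and lam mu R C lmin lmax qm qe :: real
  assumes "prob_space M" and "sets M = sets borel"
    and "C > 0" and "R \<ge> C / mu"
    and "lmin \<in> msupport M" and "lmax \<in> msupport M"
    and "msupport M \<subseteq> {lmin..lmax}"
    and "0 \<le> lmin" and "lmin < lam" and "lam < lmax" and "lmax < mu"
    and "is_qSm M lam mu R C qm"
    and "is_qSe M mu R C qe"
  shows "qm \<le> qe"
proof -
  interpret prob_space M by fact
  note sM = assms(2)
  note sMc[measurable_cong] = assms(2)
  have AEs: "AE x in M. lmin \<le> x \<and> x \<le> lmax"
    using AE_in_support[OF sM] by eventually_elim (use assms(7) in auto)
  have meas: "\<And>q. (\<lambda>x. W mu (q * x)) \<in> borel_measurable M"
    unfolding W_def by measurable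
  have intW: "integrable M (\<lambda>x. W mu (q * x))" if q: "0 \<le> q" "q \<le> 1" for q
  proof (rule integrable_const_bound[where B="1/(mu - lmax)"])
    show "AE x in M. norm (W mu (q * x)) \<le> 1 / (mu - lmax)"
      using AEs
    proof (rule AE_mp, intro AE_I2 impI)
      fix x assume x: "lmin \<le> x \<and> x \<le> lmax"
      have "q * x \<le> x" using x q assms(8) by (intro mult_left_le_one_le) auto
      hence "q * x \<le> lmax" using x by linarith
      hence p: "mu - lmax \<le> mu - q * x" by simp
      have "0 < mu - lmax" using assms(11) by simp
      then show "norm (W mu (q * x)) \<le> 1 / (mu - lmax)"
        unfolding W_def using p by (simp add: frac_le)
    qed
  qed (simp add: meas)
  define g where "g q = (\<integral>x. W mu (q * x) \<partial>M)" for q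
  have Rev: "Rev_S M lam mu R C q = q * lam * (R - C * g q)" if "0 \<le> q" "q \<le> 1" for q
  proof -
    have "(\<integral>x. (R - C * W mu (q * x)) \<partial>M) = R - C * g q"
      using intW[OF that] by (simp add: g_def prob_space)
    then show ?thesis unfolding Rev_S_def by simp
  qed
  have mono: "g a < g b" if ab: "0 \<le> a" "a < b" "b \<le> 1" for a b
    unfolding g_def
  proof (rule integral_less_AE[where A="ball lmax lmax"])
    show "integrable M (\<lambda>x. W mu (a * x))" "integrable M (\<lambda>x. W mu (b * x))"
      using intW ab by auto
    have "lmax > 0" using assms(8-10) by simp
    then show "emeasure M (ball lmax lmax) \<noteq> 0"
      using assms(6) unfolding msupport_def by auto
    show "ball lmax lmax \<in> sets M" using sM by simp
    show "AE x in M. x \<in> ball lmax lmax \<longrightarrow> W mu (a * x) \<noteq> W mu (b * x)"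
      using AEs
    proof (rule AE_mp, intro AE_I2 impI)
      fix x assume x: "lmin \<le> x \<and> x \<le> lmax" and xb: "x \<in> ball lmax lmax"
      have x0: "x > 0" using xb by (auto simp: dist_real_def)
      have "b * x \<le> x" using x0 ab by (intro mult_left_le_one_le) auto
      hence "b * x \<le> lmax" using x by linarith
      moreover have "a * x < b * x" using ab x0 by simp
      ultimately show "W mu (a * x) \<noteq> W mu (b * x)" unfolding W_def using assms(11) by auto
    qed
    show "AE x in M. W mu (a * x) \<le> W mu (b * x)"
      using AEs
    proof (rule AE_mp, intro AE_I2 impI)
      fix x assume x: "lmin \<le> x \<and> x \<le> lmax"
      have x0: "x \<ge> 0" using x assms(8) by simp
      have "b * x \<le> x" using x0 ab by (intro mult_left_le_one_le) auto
      hence "b * x \<le> lmax" using x by linarith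
      moreover have "a * x \<le> b * x" using ab x0 by (simp add: mult_right_mono)
      ultimately show "W mu (a * x) \<le> W mu (b * x)" unfolding W_def using assms(11)
        by (intro divide_left_mono) (auto intro: mult_pos_pos)
    qed
  qed
  have qm: "qm \<in> {0..1}" "\<And>q'. q' \<in> {0..1} \<Longrightarrow> Rev_S M lam mu R C q' \<le> Rev_S M lam mu R C qm"
    using assms(12) unfolding is_qSm_def by auto
  show ?thesis
  proof (cases "R - C * (\<integral>x. W mu x \<partial>M) \<ge> 0")
    case True
    then show ?thesis using assms(13) qm(1) unfolding is_qSe_def by auto
  next
    case False
    then have qe: "qe \<in> {0..1}" "C * g qe = R" using assms(13) unfolding is_qSe_def g_def by auto
    show ?thesis
    proof (rule ccontr)
      assume "\<not> qm \<le> qe"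
      hence lt: "qe < qm" by simp
      have "g qe < g qm" using mono[OF _ lt] qe qm by auto
      hence neg: "R - C * g qm < 0" proof -
        have "C * g qe < C * g qm" using \<open>g qe < g qm\<close> assms(3) by simp
        then show ?thesis using qe(2) by simp
      qed
      have pos: "qm * lam > 0" using lt qe assms(8,9) by simp
      have "Rev_S M lam mu R C qm < 0" using Rev[of qm] qm(1) neg pos
        by (simp add: mult_pos_neg)
      moreover have "Rev_S M lam mu R C 0 = 0" unfolding Rev_S_def by simp
      ultimately show False using qm(2)[of 0] by simp
    qed
  qed
qed

end
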